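(* Let $S,T$ be numerical semigroups, $w\ge1$ an integer and $f(x)\in\mathbb Z[x]$ such that $\mathrm H_S(x^w)f(x)=\mathrm H_T(x)$. Then (a) $f(0)=1$; (b) $f(1)=w$; (c) $f'(1)=w\bigl(\mathrm g(T)-w\,\mathrm g(S)+(w-1)/2\bigr)$; (d) $\mathrm F(T)=w\,\mathrm F(S)+\deg(f)$.
   Context: A numerical semigroup is a submonoid $S$ of $(\mathbb N,+)$ with $\mathbb N\setminus S$ finite. $\mathrm H_S(x)=\sum_{s\in S}x^s$ is its Hilbert series, $\mathrm F(S)$ its Frobenius number (largest integer not in $S$), and $\mathrm g(S)=\#(\mathbb N\setminus S)$ its genus. *)

theory Defs
  imports Complex_Main "HOL-Computational_Algebra.Polynomial_FPS"
begin

definition numerical_semigroup :: "nat set \<Rightarrow> bool" where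
  "numerical_semigroup S \<longleftrightarrow>
     0 \<in> S \<and> (\<forall>a\<in>S. \<forall>b\<in>S. a + b \<in> S) \<and> finite (UNIV - S)"

definition hilbert_series :: "nat set \<Rightarrow> int fps" where
  "hilbert_series S = Abs_fps (\<lambda>n. if n \<in> S then 1 else 0)"

definition frobenius :: "nat set \<Rightarrow> int" where
  "frobenius S = (if S = UNIV then -1 else int (Max (UNIV - S)))"

definition genus :: "nat set \<Rightarrow> nat" where
  "genus S = card (UNIV - S)"

end

theory Submission
  imports Defs
begin

definition gapp :: "nat set \<Rightarrow> int poly" where
  "gapp S = (\<Sum>g\<in>UNIV - S. monom 1 g)"
definition PP :: "nat set \<Rightarrow> int poly" where
  "PP S = 1 - [:1,-1:] * gapp S"

lemma coeff_gapp: "finite (UNIV - S) \<Longrightarrow> coeff (gapp S) n = (if n \<notin> S then 1 else 0)"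
  unfolding gapp_def by (simp add: coeff_sum coeff_monom)

lemma coeff_PP:
  assumes "finite (UNIV - S)" "0 \<in> S"
  shows "coeff (PP S) n = (if n = 0 then 1 else (if n \<in> S then 1 else 0) - (if n - 1 \<in> S then 1 else 0))"
  using assms by (cases n) (auto simp: PP_def coeff_gapp coeff_pCons)

lemma fps_PP:
  assumes "finite (UNIV - S)" "0 \<in> S"
  shows "fps_of_poly (PP S) = (1 - fps_X) * hilbert_series S"
  using assms by (intro fps_ext) (auto simp: coeff_PP[OF assms] algebra_simps fps_X_mult_nth hilbert_series_def)

lemma poly_PP0: "finite (UNIV - S) \<Longrightarrow> 0 \<in> S \<Longrightarrow> poly (PP S) 0 = 1"
  by (simp add: poly_0_coeff_0 coeff_PP)

lemma poly_PP1: "poly (PP S) 1 = 1"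
  by (simp add: PP_def)

lemma poly_dPP1: "finite (UNIV - S) \<Longrightarrow> poly (pderiv (PP S)) 1 = int (genus S)"
proof -
  assume f: "finite (UNIV - S)"
  have "pderiv ([:1,-1:] * gapp S) = [:-1:] * gapp S + [:1,-1:] * pderiv (gapp S)"
    by (simp only: pderiv_mult) (simp add: pderiv_pCons)
  then have "pderiv (PP S) = gapp S - [:1,-1:] * pderiv (gapp S)"
    unfolding PP_def by (simp add: pderiv_diff)
  then show ?thesis using f by (simp add: gapp_def poly_sum genus_def poly_monom)
qed

lemma degree_PP:
  assumes "finite (UNIV - S)" "0 \<in> S"
  shows "int (degree (PP S)) = frobenius S + 1"
proof (cases "S = UNIV")
  case True
  have "degree (PP S) \<le> 0"
    by (rule degree_le, intro allI impI, subst coeff_PP[OF assms]) (simp add: True)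
  then show ?thesis using True by (simp add: frobenius_def)
next
  case False
  define F where "F = Max (UNIV - S)"
  have FS: "F \<notin> S"
  proof -
    have "UNIV - S \<noteq> {}" using False by auto
    then have "F \<in> UNIV - S" unfolding F_def using Max_in[OF assms(1)] by blast
    then show ?thesis by simp
  qed
  have gt: "n \<in> S" if "n > F" for n
    using that assms(1) Max_ge[OF assms(1), of n] unfolding F_def by (metis Diff_iff UNIV_I not_le)
  have "degree (PP S) \<le> F + 1"
    by (rule degree_le) (auto simp: coeff_PP[OF assms] intro!: gt)
  moreover have "F + 1 \<le> degree (PP S)"
    by (rule le_degree) (auto simp: coeff_PP[OF assms] FS gt)
  ultimately show ?thesis using False by (simp add: frobenius_def F_def)
qed

definition QQ :: "nat \<Rightarrow> int poly" where
  "QQ w = (\<Sum>i<w. monom 1 i)"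

lemma coeff_QQ: "coeff (QQ w) n = (if n < w then 1 else 0)"
  unfolding QQ_def by (simp add: coeff_sum coeff_monom)

lemma degree_QQ: "w \<ge> 1 \<Longrightarrow> degree (QQ w) = w - 1"
  by (rule antisym, rule degree_le) (auto simp: coeff_QQ intro!: le_degree)

lemma poly_QQ0: "w \<ge> 1 \<Longrightarrow> poly (QQ w) 0 = 1"
  by (simp add: poly_0_coeff_0 coeff_QQ)

lemma poly_QQ1: "poly (QQ w) 1 = int w"
  by (simp add: QQ_def poly_sum poly_monom)

lemma poly_dQQ1: "2 * poly (pderiv (QQ w)) 1 = int w * (int w - 1)"
proof (induction w)
  case 0 then show ?case by (simp add: QQ_def)
next
  case (Suc w)
  have "QQ (Suc w) = QQ w + monom 1 w" by (simp add: QQ_def)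
  then have "poly (pderiv (QQ (Suc w))) 1 = poly (pderiv (QQ w)) 1 + int w"
    by (simp add: pderiv_add pderiv_monom poly_monom)
  then show ?case using Suc by (simp add: algebra_simps)
qed

lemma fps_QQ: "(1 - fps_X ^ w :: int fps) = (1 - fps_X) * fps_of_poly (QQ w)"
  by (simp add: QQ_def fps_of_poly_sum fps_of_poly_monom' one_diff_power_eq)

theorem lemma12:
  fixes S T :: "nat set" and w :: nat and f :: "int poly"
  assumes "numerical_semigroup S" and "numerical_semigroup T" and "w \<ge> 1"
    and "fps_compose (hilbert_series S) (fps_X ^ w) * fps_of_poly f = hilbert_series T"
  shows "poly f 0 = 1 \<and>
         poly f 1 = int w \<and>
         real_of_int (poly (pderiv f) 1) =
           real w * (real (genus T) - real w * real (genus S) + (real w - 1) / 2) \<and>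
         frobenius T = int w * frobenius S + int (degree f)"
proof -
  have fS: "finite (UNIV - S)" "0 \<in> S" and fT: "finite (UNIV - T)" "0 \<in> T"
    using assms(1,2) by (auto simp: numerical_semigroup_def)
  define A where "A = fps_compose (hilbert_series S) (fps_X ^ w)"
  define PS where "PS = pcompose (PP S) (monom 1 w)"
  have X0: "fps_nth (fps_X ^ w :: int fps) 0 = 0" using assms(3) by simp
  have m0: "coeff (monom (1::int) w) 0 = 0" using assms(3) by (simp add: coeff_monom)
  have "fps_of_poly PS = fps_compose ((1 - fps_X) * hilbert_series S) (fps_X ^ w)"
    unfolding PS_def by (simp add: fps_of_poly_pcompose[OF m0] fps_of_poly_monom' fps_PP[OF fS])
  also have "\<dots> = (1 - fps_X ^ w) * A"
    unfolding A_def by (simp add: fps_compose_mult_distrib[OF X0] fps_compose_sub_distrib fps_X_fps_compose_startby0[OF X0])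
  finally have PSe: "fps_of_poly PS = (1 - fps_X ^ w) * A" .
  have "fps_of_poly (f * PS) = (1 - fps_X ^ w) * (A * fps_of_poly f)"
    unfolding fps_of_poly_mult PSe by (simp only: mult.commute mult.left_commute mult.assoc)
  also have "A * fps_of_poly f = hilbert_series T" using assms(4) by (simp only: A_def)
  also have "(1 - fps_X ^ w) * hilbert_series T = fps_of_poly (QQ w) * ((1 - fps_X) * hilbert_series T)"
    unfolding fps_QQ by (simp only: mult.commute mult.left_commute mult.assoc)
  also have "\<dots> = fps_of_poly (QQ w * PP T)"
    by (simp add: fps_of_poly_mult fps_PP[OF fT])
  finally have E: "f * PS = QQ w * PP T" by (simp only: fps_of_poly_eq_iff)
  have PS0: "poly PS 0 = 1" using assms(3) by (simp add: power_0_left PS_def poly_pcompose poly_monom poly_PP0[OF fS])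
  have PS1: "poly PS 1 = 1" by (simp add: PS_def poly_pcompose poly_monom poly_PP1)
  have a: "poly f 0 = 1"
    using arg_cong[OF E, of "\<lambda>p. poly p 0"] by (simp add: PS0 poly_QQ0[OF assms(3)] poly_PP0[OF fT])
  have b: "poly f 1 = int w"
    using arg_cong[OF E, of "\<lambda>p. poly p 1"] by (simp add: PS1 poly_QQ1 poly_PP1)
  have dPS: "poly (pderiv PS) 1 = int w * int (genus S)"
    by (simp add: PS_def pderiv_pcompose poly_pcompose pderiv_monom poly_monom poly_dPP1[OF fS(1)])
  have "poly (pderiv (f * PS)) 1 = poly (pderiv (QQ w * PP T)) 1" using E by simp
  then have "poly (pderiv f) 1 + int w * (int w * int (genus S)) =
      poly (pderiv (QQ w)) 1 + int w * int (genus T)"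
    by (simp add: pderiv_mult PS1 dPS b poly_QQ1 poly_PP1 poly_dPP1[OF fT(1)])
  then have "2 * poly (pderiv f) 1 = 2 * int w * int (genus T) - 2 * int w * int w * int (genus S) + int w * (int w - 1)"
    using poly_dQQ1[of w] by (simp add: algebra_simps)
  then have "2 * real_of_int (poly (pderiv f) 1) = 2 * real w * real (genus T) - 2 * real w * real w * real (genus S) + real w * (real w - 1)"
    by (metis (mono_tags) of_int_of_nat_eq of_int_1 of_int_diff of_int_mult of_int_add of_int_numeral)
  then have c: "real_of_int (poly (pderiv f) 1) =
           real w * (real (genus T) - real w * real (genus S) + (real w - 1) / 2)"
    by (simp add: field_simps)
  have fnz: "f \<noteq> 0" using a by auto
  have PSnz: "PS \<noteq> 0" using PS0 by auto
  have Qnz: "QQ w \<noteq> 0" using poly_QQ0[OF assms(3)] by auto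
  have PTnz: "PP T \<noteq> 0" using poly_PP1[of T] by auto
  have "degree f + degree (PP S) * w = (w - 1) + degree (PP T)"
    using arg_cong[OF E, of degree] fnz PSnz Qnz PTnz
    by (simp add: degree_mult_eq PS_def degree_pcompose degree_monom_eq degree_QQ[OF assms(3)])
  then have "int (degree f) + int (degree (PP S)) * int w = int w - 1 + int (degree (PP T))"
  proof -
    assume h: "degree f + degree (PP S) * w = (w - 1) + degree (PP T)"
    have "int (degree f + degree (PP S) * w) = int ((w - 1) + degree (PP T))" using h by simp
    then show ?thesis using assms(3) by (simp add: of_nat_diff)
  qed
  then have d: "frobenius T = int w * frobenius S + int (degree f)"
    using degree_PP[OF fS] degree_PP[OF fT] by (simp add: algebra_simps)
  show ?thesis using a b c d by blast
qed

end
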